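(* Let $n\geqslant3$, $2<p<\infty$, $-1<\alpha<\infty$, $\frac1p+\frac1{p'}=1$ and $\phi(p)=\frac{p-2}{p-1}$. For every weight $\omega$, every $h\in L^{p'/\phi(p)}(\omega\,d\nu_\alpha)$ and every Euclidean ball $B\subset\partial\mathbb{B}_n$, \[ \left(\frac{1}{|\widehat{B}|_\alpha}\int_{\widehat{B}}h\,\omega\,d\nu_\alpha\right)\left(\frac{1}{|\widehat{B}|_\alpha}\int_{\widehat{B}}\big(S_{\omega,\alpha}(h)\,\omega\big)^{-1}d\nu_\alpha\right)\leqslant[\omega]_{p,\alpha}^{\frac{1}{p-1}}. \]
   Context: $\mathbb{B}_n$ is the real unit ball of $\mathbb{R}^n$, $\nu$ normalized Lebesgue measure, $d\nu_\alpha(x)=c_\alpha(1-|x|^2)^\alpha d\nu(x)$ with $\nu_\alpha(\mathbb{B}_n)=1$, $|E|_\alpha=\nu_\alpha(E)$. A weight is a non-negative integrable function on $\mathbb{B}_n$; $L^q(\omega d\nu_\alpha)$ is the weighted Lebesgue space with norm $(\int|f|^q\omega\,d\nu_\alpha)^{1/q}$. For $E\subset\partial\mathbb{B}_n$, $\widehat E=\{z\in\mathbb{B}_n:z/|z|\in E,\ 1-r<|z|<1\}$ with $r=\mathrm{diam}(E)/2$ (Euclidean). $[\omega]_{p,\alpha}=\sup_B\frac{\int_{\widehat B}\omega\,d\nu_\alpha}{|\widehat B|_\alpha}\left(\frac{\int_{\widehat B}\omega^{1-p'}d\nu_\alpha}{|\widehat B|_\alpha}\right)^{p-1}$ over Euclidean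 balls $B\subset\partial\mathbb{B}_n$. The maximal operator is $M_\alpha f(x)=\sup_{B}\frac{\chi_{\widehat B}(x)}{|\widehat B|_\alpha}\int_{\widehat B}|f|\,d\nu_\alpha$ (supremum over all balls $B\subset\partial\mathbb{B}_n$), and $S_{\omega,\alpha}(h)=\left(\frac{M_\alpha(|h|^{1/\phi(p)}\omega)}{\omega}\right)^{\phi(p)}$. *)

theory Defs
  imports "HOL-Analysis.Analysis"
begin

text \<open>Extended power x^e on [0,\<infinity>] with the conventions 0^e = \<infinity> and \<infinity>^e = 0 for e < 0,
  \<infinity>^e = \<infinity> for e > 0, x^0 = 1.\<close>
definition epowr :: "ennreal \<Rightarrow> real \<Rightarrow> ennreal" where
  "epowr x e =
     (if e = 0 then 1
      else if 0 < e then (if x = \<infinity> then \<infinity> else ennreal (enn2real x powr e))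
      else (if x = 0 then \<infinity> else if x = \<infinity> then 0 else ennreal (enn2real x powr e)))"

text \<open>Normalising constant: integral of (1-|x|^2)^\<alpha> over the unit ball w.r.t. Lebesgue measure.
  (The normalisation of \<nu> cancels, since \<nu>_\<alpha> is a probability measure on the ball.)\<close>
definition Zalpha :: "'n::finite itself \<Rightarrow> real \<Rightarrow> ennreal" where
  "Zalpha _ \<alpha> = (\<integral>\<^sup>+ x. indicator (ball (0::real^'n) 1) x * ennreal ((1 - (norm x)^2) powr \<alpha>) \<partial>lebesgue)"

definition nu_alpha :: "real \<Rightarrow> (real^'n::finite) measure" where
  "nu_alpha \<alpha> = density lebesgue
     (\<lambda>x. indicator (ball (0::real^'n) 1) x * ennreal ((1 - (norm x)^2) powr \<alpha>)
          / Zalpha TYPE('n::finite) \<alpha>)"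


definition sphere_balls :: "(real^'n) set set" where
  "sphere_balls = {ball \<xi> \<delta> \<inter> sphere 0 1 | \<xi> \<delta>. norm \<xi> = 1 \<and> 0 < \<delta>}"

definition tent :: "(real^'n) set \<Rightarrow> (real^'n) set" where
  "tent E = {z. (1 / norm z) *\<^sub>R z \<in> E \<and> 1 - diameter E / 2 < norm z \<and> norm z < 1}"

definition eavg :: "real \<Rightarrow> (real^'n) set \<Rightarrow> (real^'n \<Rightarrow> ennreal) \<Rightarrow> ennreal" where
  "eavg \<alpha> T f = (\<integral>\<^sup>+ x\<in>T. f x \<partial>nu_alpha \<alpha>) / emeasure (nu_alpha \<alpha>) T"

definition Bchar :: "real \<Rightarrow> real \<Rightarrow> (real^'n \<Rightarrow> real) \<Rightarrow> ennreal" where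
  "Bchar p \<alpha> \<omega> = (let p' = p / (p - 1) in
     (SUP B\<in>sphere_balls. eavg \<alpha> (tent B) (\<lambda>x. ennreal (\<omega> x))
        * epowr (eavg \<alpha> (tent B) (\<lambda>x. epowr (ennreal (\<omega> x)) (1 - p'))) (p - 1)))"

definition Malpha :: "real \<Rightarrow> (real^'n \<Rightarrow> ennreal) \<Rightarrow> real^'n \<Rightarrow> ennreal" where
  "Malpha \<alpha> f x = (SUP B\<in>sphere_balls. indicator (tent B) x * eavg \<alpha> (tent B) f)"

definition phi :: "real \<Rightarrow> real" where
  "phi p = (p - 2) / (p - 1)"

definition Sop :: "real \<Rightarrow> real \<Rightarrow> (real^'n \<Rightarrow> real) \<Rightarrow> (real^'n \<Rightarrow> real) \<Rightarrow> real^'n \<Rightarrow> ennreal" where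
  "Sop p \<alpha> \<omega> h x =
     epowr (Malpha \<alpha> (\<lambda>y. epowr (ennreal \<bar>h y\<bar>) (1 / phi p) * ennreal (\<omega> y)) x / ennreal (\<omega> x))
           (phi p)"

definition weight :: "(real^'n \<Rightarrow> real) \<Rightarrow> bool" where
  "weight \<omega> \<longleftrightarrow> (\<forall>x\<in>ball 0 1. 0 \<le> \<omega> x) \<and> set_integrable lebesgue (ball 0 1) \<omega>"

definition in_Lq_w :: "real \<Rightarrow> real \<Rightarrow> (real^'n \<Rightarrow> real) \<Rightarrow> (real^'n \<Rightarrow> real) \<Rightarrow> bool" where
  "in_Lq_w q \<alpha> \<omega> h \<longleftrightarrow>
     (\<lambda>x. indicator (ball 0 1) x * h x) \<in> borel_measurable lebesgue \<and>
     (\<integral>\<^sup>+ x. ennreal (\<bar>h x\<bar> powr q * \<omega> x) \<partial>nu_alpha \<alpha>) < \<infinity>"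

end

theory Submission imports Defs begin
lemma young_pt:
  fixes t x y \<phi> :: real
  assumes "0 \<le> t" "0 < x" "0 < y" "0 < \<phi>" "\<phi> < 1"
  shows "t \<le> \<phi> * x powr (\<phi>-1) * y powr (1-\<phi>) * t powr (1/\<phi>) + (1-\<phi>) * x powr \<phi> * y powr (-\<phi>)"
proof (cases "t = 0")
  case True
  then show ?thesis using assms by simp
next
  case False
  then have t: "t > 0" using assms by simp
  have "(t powr (1/\<phi>) / x) powr \<phi> * (1/y) powr (1-\<phi>) \<le> \<phi> * (t powr (1/\<phi>) / x) + (1-\<phi>) * (1/y)"
    by (rule Youngs_inequality_0) (use assms t in auto)
  moreover have "(t powr (1/\<phi>) / x) powr \<phi> = t / x powr \<phi>"
    using assms t by (simp add: powr_divide powr_powr)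
  moreover have "(1/y) powr (1-\<phi>) = y powr (\<phi> - 1)"
    using assms by (simp add: powr_divide powr_minus_divide powr_diff)
  ultimately have *: "t / x powr \<phi> * y powr (\<phi> - 1) \<le> \<phi> * (t powr (1/\<phi>) / x) + (1-\<phi>) * (1/y)" by simp
  have pos: "x powr \<phi> * y powr (1-\<phi>) > 0" using assms by simp
  have "t = (t / x powr \<phi> * y powr (\<phi> - 1)) * (x powr \<phi> * y powr (1-\<phi>))"
    using assms by (simp add: field_simps powr_add[symmetric])
  also have "\<dots> \<le> (\<phi> * (t powr (1/\<phi>) / x) + (1-\<phi>) * (1/y)) * (x powr \<phi> * y powr (1-\<phi>))"
    using * pos by (intro mult_right_mono) auto
  also have "\<dots> = \<phi> * x powr (\<phi>-1) * y powr (1-\<phi>) * t powr (1/\<phi>) + (1-\<phi>) * x powr \<phi> * y powr (-\<phi>)"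
    using assms by (simp add: field_simps powr_diff powr_minus)
  finally show ?thesis .
qed


lemma holder_w:
  fixes M :: "'a measure" and f w :: "'a \<Rightarrow> real"
  assumes T: "T \<in> sets M" and fm: "f \<in> borel_measurable M" and wm: "w \<in> borel_measurable M"
    and w0: "\<forall>x\<in>T. 0 \<le> w x" and \<phi>: "0 < \<phi>" "\<phi> < 1"
    and X: "(\<integral>\<^sup>+x\<in>T. ennreal (\<bar>f x\<bar> powr (1/\<phi>) * w x) \<partial>M) = ennreal X"
    and Y: "(\<integral>\<^sup>+x\<in>T. ennreal (w x) \<partial>M) = ennreal Y" and XY: "X > 0" "Y > 0"
  shows "(\<integral>\<^sup>+x\<in>T. ennreal (\<bar>f x\<bar> * w x) \<partial>M) \<le> ennreal (X powr \<phi> * Y powr (1-\<phi>))"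
proof -
  define c1 where "c1 = \<phi> * X powr (\<phi>-1) * Y powr (1-\<phi>)"
  define c2 where "c2 = (1-\<phi>) * X powr \<phi> * Y powr (-\<phi>)"
  have c: "c1 \<ge> 0" "c2 \<ge> 0" using \<phi> XY by (auto simp: c1_def c2_def)
  have pt: "ennreal (\<bar>f x\<bar> * w x) * indicator T x \<le>
      ennreal c1 * (ennreal (\<bar>f x\<bar> powr (1/\<phi>) * w x) * indicator T x)
      + ennreal c2 * (ennreal (w x) * indicator T x)" for x
  proof (cases "x \<in> T")
    case True
    have "\<bar>f x\<bar> \<le> c1 * \<bar>f x\<bar> powr (1/\<phi>) + c2"
      using young_pt[of "\<bar>f x\<bar>" X Y \<phi>] \<phi> XY by (simp add: c1_def c2_def mult.commute mult.left_commute)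
    then have "\<bar>f x\<bar> * w x \<le> (c1 * \<bar>f x\<bar> powr (1/\<phi>) + c2) * w x"
      using w0 True by (intro mult_right_mono) auto
    then have "ennreal (\<bar>f x\<bar> * w x) \<le> ennreal (c1 * (\<bar>f x\<bar> powr (1/\<phi>) * w x) + c2 * w x)"
      by (intro ennreal_leI) (simp add: algebra_simps)
    also have "\<dots> = ennreal c1 * ennreal (\<bar>f x\<bar> powr (1/\<phi>) * w x) + ennreal c2 * ennreal (w x)"
      using c w0 True by (simp add: ennreal_plus ennreal_mult)
    finally show ?thesis using True by simp
  qed simp
  have "(\<integral>\<^sup>+x\<in>T. ennreal (\<bar>f x\<bar> * w x) \<partial>M) \<le>
     (\<integral>\<^sup>+x. ennreal c1 * (ennreal (\<bar>f x\<bar> powr (1/\<phi>) * w x) * indicator T x)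
      + ennreal c2 * (ennreal (w x) * indicator T x) \<partial>M)"
    by (intro nn_integral_mono pt)
  also have "\<dots> = ennreal c1 * ennreal X + ennreal c2 * ennreal Y"
    using T fm wm X Y by (subst nn_integral_add) (auto simp: nn_integral_cmult)
  also have "\<dots> = ennreal (c1 * X + c2 * Y)"
    using c XY by (simp add: ennreal_plus ennreal_mult)
  also have "c1 * X + c2 * Y = X powr \<phi> * Y powr (1-\<phi>)"
  proof -
    have "c1 * X = \<phi> * (X powr \<phi> * Y powr (1-\<phi>))"
      using XY by (simp add: c1_def powr_diff field_simps)
    moreover have "c2 * Y = (1-\<phi>) * (X powr \<phi> * Y powr (1-\<phi>))"
      using XY by (simp add: c2_def powr_diff powr_minus field_simps)
    ultimately show ?thesis by (simp add: algebra_simps)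
  qed
  finally show ?thesis .
qed


lemma epowr_meas:
  assumes "f \<in> borel_measurable M"
  shows "(\<lambda>x. epowr (ennreal (f x)) e) \<in> borel_measurable M"
proof -
  have eq: "(\<lambda>x. epowr (ennreal (f x)) e) = (\<lambda>x. if e = 0 then 1 else if 0 < e then ennreal (max 0 (f x) powr e)
     else if f x \<le> 0 then \<infinity> else ennreal (max 0 (f x) powr e))"
    by (rule ext) (auto simp: epowr_def enn2real_ennreal max_def ennreal_eq_0_iff ennreal_neg)
  show ?thesis unfolding eq using assms by measurable
qed

lemma epowr_mono:
  assumes "0 < e" "a \<le> b" shows "epowr a e \<le> epowr b e"
proof (cases "b = \<infinity>")
  case True then show ?thesis using assms by (simp add: epowr_def)
next
  case False
  then have "a \<noteq> \<infinity>" using assms top.extremum_unique by auto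
  then show ?thesis using assms False
    by (auto simp: epowr_def top.not_eq_extremum intro!: ennreal_leI powr_mono2 enn2real_mono)
qed

lemma epowr_top: "0 < e \<Longrightarrow> epowr \<infinity> e = \<infinity>" by (simp add: epowr_def)

lemma epowr_pos: "0 < a \<Longrightarrow> 0 < e \<Longrightarrow> 0 < epowr a e"
  by (auto simp: epowr_def enn2real_positive_iff enn2real_eq_0_iff)

lemma epowr_neg_pos: "e < 0 \<Longrightarrow> 0 \<le> w \<Longrightarrow> 0 < epowr (ennreal w) e"
  by (auto simp: epowr_def)

lemma epowr_fin: "0 < e \<Longrightarrow> 0 \<le> w \<Longrightarrow> epowr (ennreal w) e = ennreal (w powr e)"
  by (simp add: epowr_def)

lemma psi_bound:
  fixes M :: ennreal and w a \<phi> e :: real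
  assumes w: "0 \<le> w" and a: "0 < a" "ennreal a \<le> M" and \<phi>: "0 < \<phi>" "\<phi> < 1" and e: "e = \<phi> - 1"
  shows "inverse (epowr (M / ennreal w) \<phi> * ennreal w) \<le> ennreal (a powr (-\<phi>)) * epowr (ennreal w) e"
proof (cases "w = 0")
  case True
  have "epowr (ennreal w) e = \<infinity>" using True \<phi> e by (simp add: epowr_def)
  moreover have "ennreal (a powr (-\<phi>)) > 0" using a by simp
  ultimately show ?thesis by (simp add: ennreal_mult_top)
next
  case False
  then have w: "w > 0" using w by simp
  show ?thesis
  proof (cases "M = \<infinity>")
    case True
    then show ?thesis using w \<phi> by (simp add: epowr_def ennreal_top_divide ennreal_top_mult)
  next
    case False
    define m where "m = enn2real M"
    have M1: "M = ennreal m" using False unfolding m_def by (simp add: less_top)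
    have "0 \<le> m" by (simp add: m_def)
    then have M: "M = ennreal m" "m \<ge> a" using a M1 by (auto simp: ennreal_le_iff)
    have m0: "m > 0" using M a by simp
    have "M / ennreal w = ennreal (m / w)" using M w m0 by (simp add: divide_ennreal)
    then have "epowr (M / ennreal w) \<phi> * ennreal w = ennreal ((m/w) powr \<phi> * w)"
      using \<phi> w m0 by (simp add: epowr_fin ennreal_mult)
    then have L: "inverse (epowr (M / ennreal w) \<phi> * ennreal w) = ennreal (inverse ((m/w) powr \<phi> * w))"
      using w m0 by (simp add: inverse_ennreal)
    have R: "ennreal (a powr (-\<phi>)) * epowr (ennreal w) e = ennreal (a powr (-\<phi>) * w powr e)"
      using w \<phi> e by (simp add: epowr_def ennreal_mult)
    have we: "w powr \<phi> = w * w powr e"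
    proof -
      have "w powr \<phi> = w powr (1 + e)" using e by simp
      also have "\<dots> = w * w powr e" using w by (simp add: powr_add)
      finally show ?thesis .
    qed
    have "inverse ((m/w) powr \<phi> * w) = m powr (-\<phi>) * w powr e"
      using w m0 e we by (simp add: powr_divide powr_minus powr_diff field_simps powr_add[symmetric])
    also have "\<dots> \<le> a powr (-\<phi>) * w powr e"
      using M a \<phi> by (intro mult_right_mono powr_mono2') auto
    finally show ?thesis unfolding L R by (intro ennreal_leI)
  qed
qed

lemma set_nn_cong: "(\<And>x. x \<in> T \<Longrightarrow> f x = g x) \<Longrightarrow> (\<integral>\<^sup>+x\<in>T. f x \<partial>M) = (\<integral>\<^sup>+x\<in>T. g x \<partial>M)"
  by (intro nn_integral_cong) (auto split: split_indicator)

theorem lemma3p5: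
  fixes p \<alpha> :: real and \<omega> h :: "real^'n \<Rightarrow> real" and B :: "(real^'n) set"
  assumes "CARD('n) \<ge> 3"
    and "2 < p" and "-1 < \<alpha>"
    and "weight \<omega>"
    and "in_Lq_w ((p / (p - 1)) / phi p) \<alpha> \<omega> h"
    and "B \<in> sphere_balls"
  shows "ereal ((\<integral>x\<in>tent B. h x * \<omega> x \<partial>nu_alpha \<alpha>) / measure (nu_alpha \<alpha>) (tent B))
           * enn2ereal (eavg \<alpha> (tent B) (\<lambda>x. inverse (Sop p \<alpha> \<omega> h x * ennreal (\<omega> x))))
         \<le> enn2ereal (epowr (Bchar p \<alpha> \<omega>) (1 / (p - 1)))"
proof -
  define \<mu> where "\<mu> = (nu_alpha \<alpha> :: (real^'n) measure)"
  define T where "T = tent B"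
  define \<phi> where "\<phi> = phi p"
  define e where "e = 1 - p / (p - 1)"
  define I where "I = (\<integral>x\<in>T. h x * \<omega> x \<partial>\<mu>)"
  define mr where "mr = measure \<mu> T"
  define \<Psi> where "\<Psi> = (\<lambda>x. inverse (Sop p \<alpha> \<omega> h x * ennreal (\<omega> x)))"
  define R where "R = epowr (Bchar p \<alpha> \<omega>) (1 / (p - 1))"
  have \<phi>: "0 < \<phi>" "\<phi> < 1" using assms(2) by (auto simp: \<phi>_def phi_def field_simps)
  have e: "e = \<phi> - 1" "e < 0" using assms(2) by (auto simp: e_def \<phi>_def phi_def field_simps)
  have p1: "1 - \<phi> = 1 / (p - 1)" using assms(2) by (auto simp: \<phi>_def phi_def field_simps)
  have main: "ereal (I / mr) * enn2ereal (eavg \<alpha> T \<Psi>) \<le> enn2ereal R"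
  proof (cases "I / mr > 0")
    case False
    then have "ereal (I / mr) * enn2ereal (eavg \<alpha> T \<Psi>) \<le> 0"
      by (simp add: ereal_mult_le_0_iff)
    also have "0 \<le> enn2ereal R" by simp
    finally show ?thesis .
  next
    case True
    have mr0: "mr > 0"
    proof -
      have "mr \<ge> 0" by (simp add: mr_def)
      moreover have "mr \<noteq> 0" using True by auto
      ultimately show ?thesis by simp
    qed
    have I0: "I > 0" using True mr0 by (simp add: zero_less_divide_iff)
    have Tsets: "T \<in> sets \<mu>" using mr0 measure_notin_sets[of T \<mu>] by (auto simp: mr_def)
    have mfin: "emeasure \<mu> T \<noteq> \<infinity>" using mr0 by (auto simp: mr_def measure_def)
    have m: "emeasure \<mu> T = ennreal mr" using mfin by (simp add: mr_def emeasure_eq_ennreal_measure)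
    have Tball: "T \<subseteq> ball 0 1" by (auto simp: T_def tent_def)
    have \<omega>0: "\<And>x. x \<in> T \<Longrightarrow> 0 \<le> \<omega> x" using assms(4) Tball by (auto simp: weight_def)
    define \<omega>' where "\<omega>' = (\<lambda>x. indicator (ball 0 1) x * \<omega> x)"
    define h' where "h' = (\<lambda>x. indicator (ball 0 1) x * h x)"
    have \<omega>'T: "\<And>x. x \<in> T \<Longrightarrow> \<omega>' x = \<omega> x" and h'T: "\<And>x. x \<in> T \<Longrightarrow> h' x = h x"
      using Tball by (auto simp: \<omega>'_def h'_def)
    have \<omega>m: "\<omega>' \<in> borel_measurable \<mu>"
    proof -
      have "integrable lebesgue (\<lambda>x. indicator (ball (0::real^'n) 1) x *\<^sub>R \<omega> x)"
        using assms(4) by (simp add: weight_def set_integrable_def)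
      then have "(\<lambda>x. indicator (ball (0::real^'n) 1) x *\<^sub>R \<omega> x) \<in> borel_measurable lebesgue" by auto
      then show ?thesis by (simp add: \<mu>_def nu_alpha_def \<omega>'_def)
    qed
    have hm: "h' \<in> borel_measurable \<mu>"
      using assms(5) by (simp add: \<mu>_def nu_alpha_def h'_def in_Lq_w_def)
    define J where "J = (\<integral>\<^sup>+x\<in>T. ennreal (\<bar>h' x\<bar> * \<omega>' x) \<partial>\<mu>)"
    have intg: "integrable \<mu> (\<lambda>x. indicator T x *\<^sub>R (h x * \<omega> x))"
    proof (rule ccontr)
      assume "\<not> ?thesis"
      then have "I = 0" by (simp add: I_def set_lebesgue_integral_def not_integrable_integral_eq)
      then show False using I0 by simp
    qed
    have normeq: "(\<integral>\<^sup>+x. ennreal (norm (indicator T x *\<^sub>R (h x * \<omega> x))) \<partial>\<mu>) = J"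
      unfolding J_def
      by (intro nn_integral_cong) (auto split: split_indicator simp: \<omega>'T h'T \<omega>0 abs_mult)
    have IJ: "ennreal I \<le> J"
    proof -
      have "ennreal I \<le> ennreal (norm I)" by (intro ennreal_leI) simp
      also have "\<dots> \<le> J" using integral_norm_bound_ennreal[OF intg] normeq
        by (simp add: I_def set_lebesgue_integral_def)
      finally show ?thesis .
    qed
    have J0: "J > 0" using IJ I0
      by (metis ennreal_eq_0_iff leD linorder_not_le not_gr_zero order_antisym_conv zero_le)
    note [measurable] = \<omega>m hm Tsets
    have epm[measurable]: "(\<lambda>x. epowr (ennreal (\<omega>' x)) e) \<in> borel_measurable \<mu>"
      by (rule epowr_meas[OF \<omega>m])
    define Y where "Y = (\<integral>\<^sup>+x\<in>T. ennreal (\<omega>' x) \<partial>\<mu>)"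
    define X where "X = (\<integral>\<^sup>+x\<in>T. ennreal (\<bar>h' x\<bar> powr (1/\<phi>) * \<omega>' x) \<partial>\<mu>)"
    define U where "U = (\<integral>\<^sup>+x\<in>T. epowr (ennreal (\<omega>' x)) e \<partial>\<mu>)"
    have Y0: "Y > 0"
    proof (rule ccontr)
      assume "\<not> Y > 0"
      then have "Y = 0" by simp
      then have "AE x in \<mu>. ennreal (\<omega>' x) * indicator T x = 0"
        unfolding Y_def by (subst (asm) nn_integral_0_iff_AE) auto
      then have "AE x in \<mu>. ennreal (\<bar>h' x\<bar> * \<omega>' x) * indicator T x = 0"
        by eventually_elim (auto split: split_indicator simp: \<omega>'T \<omega>0 ennreal_eq_0_iff mult_nonneg_nonpos)
      then have "J = 0" unfolding J_def by (subst nn_integral_0_iff_AE) auto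
      then show False using J0 by simp
    qed
    have X0: "X > 0"
    proof (rule ccontr)
      assume "\<not> X > 0"
      then have "X = 0" by simp
      then have "AE x in \<mu>. ennreal (\<bar>h' x\<bar> powr (1/\<phi>) * \<omega>' x) * indicator T x = 0"
        unfolding X_def by (subst (asm) nn_integral_0_iff_AE) auto
      then have "AE x in \<mu>. ennreal (\<bar>h' x\<bar> * \<omega>' x) * indicator T x = 0"
      proof eventually_elim
        case (elim x)
        show ?case
        proof (cases "x \<in> T")
          case True
          then have "\<bar>h' x\<bar> powr (1/\<phi>) * \<omega>' x \<le> 0" using elim by (simp add: ennreal_eq_0_iff)
          moreover have "\<omega>' x \<ge> 0" using True \<omega>'T \<omega>0 by simp
          ultimately have "\<bar>h' x\<bar> powr (1/\<phi>) * \<omega>' x = 0" by (meson antisym mult_nonneg_nonneg powr_ge_zero)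
          then have "h' x = 0 \<or> \<omega>' x = 0" by auto
          then show ?thesis by auto
        qed simp
      qed
      then have "J = 0" unfolding J_def by (subst nn_integral_0_iff_AE) auto
      then show False using J0 by simp
    qed
    have U0: "U > 0"
    proof (rule ccontr)
      assume "\<not> U > 0"
      then have "U = 0" by simp
      then have "AE x in \<mu>. epowr (ennreal (\<omega>' x)) e * indicator T x = 0"
        unfolding U_def by (subst (asm) nn_integral_0_iff_AE) auto
      then have "AE x in \<mu>. x \<notin> T"
        by eventually_elim (use epowr_neg_pos[OF e(2)] \<omega>'T \<omega>0 in \<open>fastforce split: split_indicator\<close>)
      then have "emeasure \<mu> T = 0"
        using AE_iff_measurable[OF Tsets, of "\<lambda>x. x \<notin> T"] sets.sets_into_space[OF Tsets] by auto
      then show False using m mr0 by simp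
    qed
    have avgY: "eavg \<alpha> T (\<lambda>x. ennreal (\<omega> x)) = Y / ennreal mr"
    proof -
      have "(\<integral>\<^sup>+x\<in>T. ennreal (\<omega> x) \<partial>\<mu>) = Y" unfolding Y_def by (rule set_nn_cong) (simp add: \<omega>'T)
      then show ?thesis by (simp add: eavg_def \<mu>_def[symmetric] m)
    qed
    have avgU: "eavg \<alpha> T (\<lambda>x. epowr (ennreal (\<omega> x)) (1 - p / (p - 1))) = U / ennreal mr"
    proof -
      have "(\<integral>\<^sup>+x\<in>T. epowr (ennreal (\<omega> x)) (1 - p / (p - 1)) \<partial>\<mu>) = U"
        unfolding U_def by (rule set_nn_cong) (simp add: \<omega>'T e_def)
      then show ?thesis by (simp add: eavg_def \<mu>_def[symmetric] m)
    qed
    have Bge: "(Y / ennreal mr) * epowr (U / ennreal mr) (p - 1) \<le> Bchar p \<alpha> \<omega>"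
      unfolding avgY[symmetric] avgU[symmetric] Bchar_def Let_def T_def
      by (rule SUP_upper[OF assms(6)])
    have Rge: "epowr ((Y / ennreal mr) * epowr (U / ennreal mr) (p - 1)) (1 / (p - 1)) \<le> R"
      unfolding R_def using assms(2) by (intro epowr_mono Bge) simp
    have p1pos: "0 < p - 1" "0 < 1 / (p - 1)" using assms(2) by auto
    show ?thesis
    proof (cases "Y = \<infinity> \<or> U = \<infinity>")
      case True
      have Yd0: "Y / ennreal mr > 0" using Y0 by (simp add: ennreal_zero_less_divide) 
      have Ud0: "U / ennreal mr > 0" using U0 by (simp add: ennreal_zero_less_divide)
      have "(Y / ennreal mr) * epowr (U / ennreal mr) (p - 1) = \<infinity>"
      proof (cases "Y = \<infinity>")
        case True
        then have "Y / ennreal mr = \<infinity>" by (simp add: ennreal_top_divide)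
        then show ?thesis using epowr_pos[OF Ud0 p1pos(1)] by (simp add: ennreal_top_mult)
      next
        case False
        then have "U = \<infinity>" using \<open>Y = \<infinity> \<or> U = \<infinity>\<close> by simp
        then have "U / ennreal mr = \<infinity>" by (simp add: ennreal_top_divide)
        then have "epowr (U / ennreal mr) (p - 1) = \<infinity>" using epowr_top[OF p1pos(1)] by simp
        then show ?thesis using Y0 by (simp add: ennreal_mult_top)
      qed
      then have "R = \<infinity>" using Rge epowr_top[OF p1pos(2)] by (simp add: top_unique)
      then show ?thesis by simp
    next
      case False
      define y where "y = enn2real Y"
      define u where "u = enn2real U"
      have Yy: "Y = ennreal y" and Uu: "U = ennreal u" using False by (auto simp: y_def u_def less_top)
      have y0: "y > 0" and u0: "u > 0" using Y0 U0 Yy Uu by auto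
      define r where "r = (p / (p - 1)) / \<phi>"
      define Z where "Z = (\<integral>\<^sup>+x. ennreal (\<bar>h x\<bar> powr r * \<omega> x) \<partial>\<mu>)"
      have Zfin: "Z < \<infinity>" using assms(5) by (simp add: in_Lq_w_def Z_def r_def \<mu>_def \<phi>_def)
      define X2 where "X2 = (\<integral>\<^sup>+x\<in>T. ennreal (\<bar>h' x\<bar> powr r * \<omega>' x) \<partial>\<mu>)"
      have qr: "1/\<phi> \<le> r" "0 < 1/\<phi>"
      proof -
        have "1 \<le> p / (p - 1)" using assms(2) by (simp add: field_simps)
        then have "1/\<phi> \<le> (p / (p - 1)) / \<phi>" using \<phi> by (intro divide_right_mono) auto
        then show "1/\<phi> \<le> r" by (simp add: r_def)
        show "0 < 1/\<phi>" using \<phi> by simp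
      qed
      have "X \<le> (\<integral>\<^sup>+x. ennreal (\<omega>' x) * indicator T x + ennreal (\<bar>h' x\<bar> powr r * \<omega>' x) * indicator T x \<partial>\<mu>)"
        unfolding X_def
      proof (intro nn_integral_mono)
        fix x
        show "ennreal (\<bar>h' x\<bar> powr (1/\<phi>) * \<omega>' x) * indicator T x
          \<le> ennreal (\<omega>' x) * indicator T x + ennreal (\<bar>h' x\<bar> powr r * \<omega>' x) * indicator T x"
        proof (cases "x \<in> T")
          case True
          have w: "0 \<le> \<omega>' x" using True \<omega>'T \<omega>0 by simp
          have "\<bar>h' x\<bar> powr (1/\<phi>) \<le> 1 + \<bar>h' x\<bar> powr r"
          proof (cases "\<bar>h' x\<bar> \<le> 1")
            case True
            then have "\<bar>h' x\<bar> powr (1/\<phi>) \<le> 1" using qr by (intro powr_le1) auto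
            then show ?thesis by (smt (verit) powr_ge_zero)
          next
            case False
            then have "\<bar>h' x\<bar> powr (1/\<phi>) \<le> \<bar>h' x\<bar> powr r" using qr by (intro powr_mono) auto
            then show ?thesis by simp
          qed
          then have "\<bar>h' x\<bar> powr (1/\<phi>) * \<omega>' x \<le> \<omega>' x + \<bar>h' x\<bar> powr r * \<omega>' x"
            using w by (metis distrib_right mult_1 mult_right_mono)
          then have "ennreal (\<bar>h' x\<bar> powr (1/\<phi>) * \<omega>' x) \<le> ennreal (\<omega>' x + \<bar>h' x\<bar> powr r * \<omega>' x)"
            by (rule ennreal_leI)
          also have "\<dots> = ennreal (\<omega>' x) + ennreal (\<bar>h' x\<bar> powr r * \<omega>' x)"
            using w by (intro ennreal_plus) auto
          finally have "ennreal (\<bar>h' x\<bar> powr (1/\<phi>) * \<omega>' x) \<le> ennreal (\<omega>' x) + ennreal (\<bar>h' x\<bar> powr r * \<omega>' x)" .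
          then show ?thesis using True by simp
        qed simp
      qed
      also have "\<dots> = Y + X2" unfolding Y_def X2_def by (rule nn_integral_add) auto
      also have "X2 \<le> Z" unfolding X2_def Z_def
        by (intro nn_integral_mono) (auto split: split_indicator simp: \<omega>'T h'T)
      finally have "X \<le> Y + Z" by (simp add: add_left_mono)
      then have Xfin: "X < \<infinity>" using Zfin Yy by (simp add: order_le_less_trans ennreal_add_less_top)
      define x where "x = enn2real X"
      have Xx: "X = ennreal x" using Xfin by (simp add: x_def less_top)
      have x0: "x > 0" using X0 Xx by auto
      have hold: "J \<le> ennreal (x powr \<phi> * y powr (1-\<phi>))"
        unfolding J_def using Tsets hm \<omega>m \<omega>'T \<omega>0 \<phi> X_def[unfolded Xx] Y_def[unfolded Yy] x0 y0
        by (intro holder_w) auto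
      have Ibound: "I \<le> x powr \<phi> * y powr (1-\<phi>)"
        using order_trans[OF IJ hold] by (simp add: ennreal_le_iff)
      define a where "a = x / mr"
      have a0: "a > 0" using x0 mr0 by (simp add: a_def)
      define F where "F = (\<lambda>y. epowr (ennreal \<bar>h y\<bar>) (1 / \<phi>) * ennreal (\<omega> y))"
      have FX: "(\<integral>\<^sup>+z\<in>T. F z \<partial>\<mu>) = X" unfolding X_def F_def
        by (rule set_nn_cong) (simp add: \<omega>'T h'T epowr_fin[OF qr(2)] ennreal_mult \<omega>0)
      have avgF: "eavg \<alpha> T F = ennreal a"
        using FX x0 mr0 by (simp add: eavg_def \<mu>_def[symmetric] m Xx a_def divide_ennreal)
      have Mge: "ennreal a \<le> Malpha \<alpha> F z" if "z \<in> T" for z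
      proof -
        have "ennreal a = indicator (tent B) z * eavg \<alpha> (tent B) F"
          using that avgF by (simp add: T_def)
        also have "\<dots> \<le> Malpha \<alpha> F z" unfolding Malpha_def by (rule SUP_upper[OF assms(6)])
        finally show ?thesis .
      qed
      have Psib: "\<Psi> z \<le> ennreal (a powr (-\<phi>)) * epowr (ennreal (\<omega>' z)) e" if "z \<in> T" for z
      proof -
        have "\<Psi> z = inverse (epowr (Malpha \<alpha> F z / ennreal (\<omega> z)) \<phi> * ennreal (\<omega> z))"
          by (simp add: \<Psi>_def Sop_def \<phi>_def F_def)
        also have "\<dots> \<le> ennreal (a powr (-\<phi>)) * epowr (ennreal (\<omega> z)) e"
          by (rule psi_bound[OF \<omega>0[OF that] a0 Mge[OF that] \<phi> e(1)])
        finally show ?thesis using \<omega>'T[OF that] by simp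
      qed
      have "(\<integral>\<^sup>+z\<in>T. \<Psi> z \<partial>\<mu>) \<le> (\<integral>\<^sup>+z. ennreal (a powr (-\<phi>)) * (epowr (ennreal (\<omega>' z)) e * indicator T z) \<partial>\<mu>)"
        by (intro nn_integral_mono) (auto split: split_indicator intro: Psib)
      also have "\<dots> = ennreal (a powr (-\<phi>)) * U" unfolding U_def by (rule nn_integral_cmult) auto
      finally have "eavg \<alpha> T \<Psi> \<le> ennreal (a powr (-\<phi>)) * ennreal u / ennreal mr"
        unfolding eavg_def \<mu>_def[symmetric] m Uu by (rule divide_right_mono_ennreal)
      also have "\<dots> = ennreal (a powr (-\<phi>) * u / mr)"
        using u0 mr0 by (simp add: ennreal_mult[symmetric] divide_ennreal)
      finally have avgPsi: "eavg \<alpha> T \<Psi> \<le> ennreal (a powr (-\<phi>) * u / mr)" .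
      have LHS: "ereal (I / mr) * enn2ereal (eavg \<alpha> T \<Psi>) \<le> ereal (I / mr * (a powr (-\<phi>) * u / mr))"
      proof -
        have "ereal (I / mr) * enn2ereal (eavg \<alpha> T \<Psi>) \<le> ereal (I / mr) * enn2ereal (ennreal (a powr (-\<phi>) * u / mr))"
          using avgPsi True by (intro ereal_mult_left_mono) (auto simp: less_eq_ennreal.rep_eq[symmetric])
        also have "\<dots> = ereal (I / mr * (a powr (-\<phi>) * u / mr))"
          using u0 mr0 by simp
        finally show ?thesis .
      qed
      have RHS: "ereal ((y/mr) powr (1/(p-1)) * (u/mr)) \<le> enn2ereal R"
      proof -
        have "epowr (ennreal (u/mr)) (p - 1) = ennreal ((u/mr) powr (p-1))"
          using u0 mr0 p1pos by (simp add: epowr_fin)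
        then have "(Y / ennreal mr) * epowr (U / ennreal mr) (p - 1) = ennreal (y/mr * (u/mr) powr (p-1))"
        proof -
          have "ennreal (y/mr) * ennreal ((u/mr) powr (p-1)) = ennreal (y/mr * (u/mr) powr (p-1))"
            using y0 mr0 by (intro ennreal_mult[symmetric]) auto
          then show ?thesis using y0 u0 mr0 \<open>epowr (ennreal (u/mr)) (p - 1) = _\<close>
            by (simp add: Yy Uu divide_ennreal)
        qed
        then have "epowr ((Y / ennreal mr) * epowr (U / ennreal mr) (p - 1)) (1 / (p - 1))
            = ennreal ((y/mr * (u/mr) powr (p-1)) powr (1/(p-1)))"
          using y0 u0 mr0 p1pos by (simp add: epowr_fin)
        also have "(y/mr * (u/mr) powr (p-1)) powr (1/(p-1)) = (y/mr) powr (1/(p-1)) * (u/mr)"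
        proof -
          have "(y/mr * (u/mr) powr (p-1)) powr (1/(p-1)) = (y/mr) powr (1/(p-1)) * ((u/mr) powr (p-1)) powr (1/(p-1))"
            by (rule powr_mult)
          also have "((u/mr) powr (p-1)) powr (1/(p-1)) = u/mr"
            using u0 mr0 p1pos by (simp add: powr_powr)
          finally show ?thesis .
        qed
        finally have "ennreal ((y/mr) powr (1/(p-1)) * (u/mr)) \<le> R" using Rge by simp
        then show ?thesis using y0 u0 mr0 by (simp add: less_eq_ennreal.rep_eq)
      qed
      have real: "I / mr * (a powr (-\<phi>) * u / mr) \<le> (y/mr) powr (1/(p-1)) * (u/mr)"
      proof -
        have eq: "x powr \<phi> * y powr (1-\<phi>) / mr * a powr (-\<phi>) = (y/mr) powr (1-\<phi>)"
          using x0 y0 mr0 by (simp add: a_def powr_divide powr_minus powr_diff field_simps)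
        have "I / mr * a powr (-\<phi>) \<le> x powr \<phi> * y powr (1-\<phi>) / mr * a powr (-\<phi>)"
          using Ibound mr0 by (intro mult_right_mono divide_right_mono) auto
        then have "I / mr * a powr (-\<phi>) \<le> (y/mr) powr (1/(p-1))" using eq p1 by simp
        then have "I / mr * a powr (-\<phi>) * (u / mr) \<le> (y/mr) powr (1/(p-1)) * (u/mr)"
          using u0 mr0 by (intro mult_right_mono) auto
        then show ?thesis by (simp add: algebra_simps)
      qed
      show ?thesis using LHS RHS real by (meson ereal_less_eq(3) order_trans)
    qed
  qed
  then show ?thesis by (simp add: I_def mr_def \<mu>_def T_def \<Psi>_def R_def)
qed

end
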